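(* Let $q$ be an odd prime and let $(G,H,T)$ be the envelope of a right conjugacy closed loop of order $2q$. Let $K$ be a subgroup with $H\lneq K\lneq G$, $|G:K|=q$ and $|K:H|=2$. If $K\trianglelefteq G$, then $G$ is abelian and $H=1$.
   Context: For a finite loop $\mathcal{L}$ with identity $e$: $G=\langle R_a\mid a\in\mathcal L\rangle$ with $R_a\colon x\mapsto xa$, $H$ the stabilizer of $e$ in $G$, $T=\{R_a\}$; $(G,H,T)$ is the envelope; the loop is right conjugacy closed if $T$ is a union of conjugacy classes of $G$. *)

theory Defs
  imports "HOL-Algebra.Algebra"
begin

definition is_loop :: "'a set \<Rightarrow> ('a \<Rightarrow> 'a \<Rightarrow> 'a) \<Rightarrow> 'a \<Rightarrow> bool" where
  "is_loop L m e \<longleftrightarrow> e \<in> L \<and> (\<forall>a\<in>L. \<forall>b\<in>L. m a b \<in> L)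
     \<and> (\<forall>a\<in>L. m e a = a \<and> m a e = a)
     \<and> (\<forall>a\<in>L. \<forall>b\<in>L. \<exists>!x. x \<in> L \<and> m a x = b)
     \<and> (\<forall>a\<in>L. \<forall>b\<in>L. \<exists>!y. y \<in> L \<and> m y a = b)"

definition Rmap :: "'a set \<Rightarrow> ('a \<Rightarrow> 'a \<Rightarrow> 'a) \<Rightarrow> 'a \<Rightarrow> ('a \<Rightarrow> 'a)" where
  "Rmap L m a = (\<lambda>x\<in>L. m x a)"

definition env_T :: "'a set \<Rightarrow> ('a \<Rightarrow> 'a \<Rightarrow> 'a) \<Rightarrow> ('a \<Rightarrow> 'a) set" where
  "env_T L m = Rmap L m ` L"

definition env_G :: "'a set \<Rightarrow> ('a \<Rightarrow> 'a \<Rightarrow> 'a) \<Rightarrow> ('a \<Rightarrow> 'a) monoid" where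
  "env_G L m = (BijGroup L) \<lparr>carrier := generate (BijGroup L) (env_T L m)\<rparr>"

definition env_H :: "'a set \<Rightarrow> ('a \<Rightarrow> 'a \<Rightarrow> 'a) \<Rightarrow> 'a \<Rightarrow> ('a \<Rightarrow> 'a) set" where
  "env_H L m e = {g \<in> carrier (env_G L m). g e = e}"

definition rcc_loop :: "'a set \<Rightarrow> ('a \<Rightarrow> 'a \<Rightarrow> 'a) \<Rightarrow> 'a \<Rightarrow> bool" where
  "rcc_loop L m e \<longleftrightarrow> is_loop L m e \<and>
     (\<forall>g\<in>carrier (env_G L m). \<forall>t\<in>env_T L m.
        g \<otimes>\<^bsub>env_G L m\<^esub> t \<otimes>\<^bsub>env_G L m\<^esub> inv\<^bsub>env_G L m\<^esub> g \<in> env_T L m)"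

end

theory Submission
  imports Defs
begin


lemma (in group) gcanc1: "x \<in> carrier G \<Longrightarrow> y \<in> carrier G \<Longrightarrow> inv x \<otimes> (x \<otimes> y) = y"
  by (simp add: m_assoc[symmetric])
lemma (in group) gcanc2: "x \<in> carrier G \<Longrightarrow> y \<in> carrier G \<Longrightarrow> x \<otimes> (inv x \<otimes> y) = y"
  by (simp add: m_assoc[symmetric])
lemmas (in group) gcanc = gcanc1 gcanc2

lemma (in group) lemA:
  assumes K: "subgroup K G"
    and nK: "\<And>g k. g \<in> carrier G \<Longrightarrow> k \<in> K \<Longrightarrow> g \<otimes> k \<otimes> inv g \<in> K"
    and ab: "\<And>a b. a \<in> K \<Longrightarrow> b \<in> K \<Longrightarrow> a \<otimes> b = b \<otimes> a"
    and s: "s \<in> carrier G" and sq: "s [^] (q::nat) \<in> K" and odd: "odd q"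
    and c: "\<And>k. k \<in> K \<Longrightarrow> k \<otimes> s \<otimes> inv k \<otimes> inv s \<in> {\<one>, c}"
    and k: "k \<in> K"
  shows "k \<otimes> s = s \<otimes> k"
proof (rule ccontr)
  assume ne: "k \<otimes> s \<noteq> s \<otimes> k"
  have Kc: "x \<in> K \<Longrightarrow> x \<in> carrier G" for x using subgroup.mem_carrier[OF K] .
  have Kinv: "x \<in> K \<Longrightarrow> inv x \<in> K" for x using subgroup.m_inv_closed[OF K] .
  have Km: "x \<in> K \<Longrightarrow> y \<in> K \<Longrightarrow> x \<otimes> y \<in> K" for x y using subgroup.m_closed[OF K] .
  define psi where "psi x = x \<otimes> s \<otimes> inv x \<otimes> inv s" for x
  define u where "u = s \<otimes> k \<otimes> inv s"
  have kc: "k \<in> carrier G" using Kc k .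
  have uK: "u \<in> K" unfolding u_def using nK s k .
  have uc: "u \<in> carrier G" using Kc uK .
  have psik: "psi k = k \<otimes> inv u"
    unfolding psi_def u_def using s kc by (simp add: inv_mult_group m_assoc gcanc)
  have psiK: "x \<in> K \<Longrightarrow> psi x \<in> K" for x
  proof -
    assume x: "x \<in> K"
    have 1: "s \<otimes> inv x \<otimes> inv s \<in> K" using nK[OF s Kinv[OF x]] .
    have "psi x = x \<otimes> (s \<otimes> inv x \<otimes> inv s)" unfolding psi_def using x Kc s by (simp add: m_assoc gcanc)
    then show ?thesis using Km[OF x 1] by simp
  qed
  have "psi k \<noteq> \<one>"
  proof
    assume "psi k = \<one>"
    hence "k \<otimes> inv u = \<one>" using psik by simp
    hence "k = u" using inv_solve_right'[OF one_closed kc uc] uc by simp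
    moreover have "u \<otimes> s = s \<otimes> k" unfolding u_def using s kc by (simp add: m_assoc gcanc)
    ultimately have "s \<otimes> k = k \<otimes> s" by simp
    with ne show False by simp
  qed
  hence pc: "psi k = c" using c[OF k] unfolding psi_def by auto
  hence cK: "c \<in> K" using psiK[OF k] by simp
  hence cc: "c \<in> carrier G" using Kc by blast
  have cne: "c \<noteq> \<one>" using pc \<open>psi k \<noteq> \<one>\<close> by simp
  have "psi (k \<otimes> k) = k \<otimes> psi k \<otimes> (s \<otimes> inv k \<otimes> inv s)"
    unfolding psi_def using s kc by (simp add: inv_mult_group m_assoc gcanc)
  also have "\<dots> = c \<otimes> k \<otimes> (s \<otimes> inv k \<otimes> inv s)"
    using pc ab[OF k cK] by simp
  also have "\<dots> = c \<otimes> psi k" unfolding psi_def using s kc cc by (simp add: m_assoc gcanc)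
  finally have "psi (k \<otimes> k) = c \<otimes> c" using pc by simp
  hence "c \<otimes> c \<in> {\<one>, c}" using c[OF Km[OF k k]] unfolding psi_def by simp
  moreover have "c \<otimes> c \<noteq> c" using cne cc by simp
  ultimately have c2: "c \<otimes> c = \<one>" by blast
  have "psi u = s \<otimes> psi k \<otimes> inv s"
    unfolding psi_def u_def using s kc by (simp add: inv_mult_group m_assoc gcanc)
  hence "s \<otimes> c \<otimes> inv s \<in> {\<one>, c}" using c[OF uK] pc unfolding psi_def by simp
  moreover have "s \<otimes> c \<otimes> inv s \<noteq> \<one>"
  proof
    assume "s \<otimes> c \<otimes> inv s = \<one>"
    hence "s \<otimes> c \<otimes> inv s \<otimes> s = s" using s by simp
    hence "s \<otimes> c = s" using s cc by (simp add: m_assoc gcanc)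
    hence "c = \<one>" using s cc by simp
    with cne show False by simp
  qed
  ultimately have phic: "s \<otimes> c \<otimes> inv s = c" by blast
  have "k \<otimes> inv u = c" using psik pc by simp
  hence kcu: "k = c \<otimes> u" using inv_solve_right'[OF cc kc uc] by simp
  have "c \<otimes> k = c \<otimes> c \<otimes> u" using kcu cc uc by (simp add: m_assoc gcanc)
  hence ucK: "u = c \<otimes> k" using c2 uc by simp
  have "s \<otimes> u \<otimes> inv s = s \<otimes> (c \<otimes> k) \<otimes> inv s" using ucK by simp
  also have "\<dots> = (s \<otimes> c \<otimes> inv s) \<otimes> (s \<otimes> k \<otimes> inv s)" using s cc kc by (simp add: m_assoc gcanc)
  also have "\<dots> = c \<otimes> u" using phic u_def by simp
  also have "\<dots> = c \<otimes> (c \<otimes> k)" using ucK by simp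
  also have "\<dots> = k" using c2 cc kc by (simp add: m_assoc[symmetric])
  finally have "s \<otimes> u \<otimes> inv s = k" .
  hence X: "s \<otimes> s \<otimes> k \<otimes> inv s \<otimes> inv s = k" unfolding u_def using s kc by (simp add: m_assoc gcanc)
  have "s \<otimes> s \<otimes> k = s \<otimes> s \<otimes> k \<otimes> inv s \<otimes> inv s \<otimes> s \<otimes> s" using s kc by (simp add: m_assoc gcanc)
  also have "\<dots> = k \<otimes> s \<otimes> s" using X by simp
  finally have s2: "s \<otimes> s \<otimes> k = k \<otimes> (s \<otimes> s)" using s kc by (simp add: m_assoc gcanc)
  have s2n: "s [^] (2*j) \<otimes> k = k \<otimes> s [^] (2*j)" for j :: nat
  proof (induction j)
    case 0 then show ?case using kc by simp
  next
    case (Suc j)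
    have e: "s [^] (2 * Suc j) = s [^] (2*j) \<otimes> (s \<otimes> s)" using s
      by (simp add: m_assoc gcanc)
    have "s [^] (2 * Suc j) \<otimes> k = s [^] (2*j) \<otimes> (s \<otimes> s \<otimes> k)" unfolding e using s kc
      by (simp add: m_assoc gcanc)
    also have "\<dots> = (s [^] (2*j) \<otimes> k) \<otimes> (s \<otimes> s)" unfolding s2 using s kc by (simp add: m_assoc gcanc)
    also have "\<dots> = k \<otimes> s [^] (2 * Suc j)" unfolding Suc e using s kc by (simp add: m_assoc gcanc)
    finally show ?case .
  qed
  obtain j where qj: "q = 2*j + 1" using odd oddE by blast
  have sq1: "s [^] q = s [^] (2*j) \<otimes> s" using qj s by simp
  have "s [^] q \<otimes> k = k \<otimes> s [^] q" using ab[OF sq k] by simp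
  hence "s [^] (2*j) \<otimes> s \<otimes> k = k \<otimes> s [^] (2*j) \<otimes> s" using sq1 s kc
    by (simp add: m_assoc gcanc)
  hence "s [^] (2*j) \<otimes> (s \<otimes> k) = s [^] (2*j) \<otimes> (k \<otimes> s)" using s kc s2n[of j, symmetric] 
    by (simp add: m_assoc gcanc)
  hence "s \<otimes> k = k \<otimes> s" using s kc by simp
  with ne show False by simp
qed



lemma (in group) lemB:
  assumes fin: "finite (carrier G)" and K: "subgroup K G"
    and q: "Factorial_Ring.prime (card (rcosets K))"
    and cen: "\<And>k g. k \<in> K \<Longrightarrow> g \<in> carrier G \<Longrightarrow> k \<otimes> g = g \<otimes> k"
    and s: "s \<in> carrier G" and g: "g \<in> carrier G"
  shows "s \<otimes> g = g \<otimes> s"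
proof (cases "s \<in> K")
  case True then show ?thesis using cen g by blast
next
  case False
  define C where "C = {x \<in> carrier G. x \<otimes> s = s \<otimes> x}"
  have C: "subgroup C G"
  proof
    show "C \<subseteq> carrier G" unfolding C_def by blast
    show "\<one> \<in> C" unfolding C_def using s by simp
  next
    fix x y assume "x \<in> C" "y \<in> C"
    then have x: "x \<in> carrier G" "x \<otimes> s = s \<otimes> x" and y: "y \<in> carrier G" "y \<otimes> s = s \<otimes> y"
      unfolding C_def by auto
    have "x \<otimes> y \<otimes> s = x \<otimes> (y \<otimes> s)" using x y s by (simp add: m_assoc)
    also have "\<dots> = x \<otimes> (s \<otimes> y)" by (simp only: y(2))
    also have "\<dots> = (x \<otimes> s) \<otimes> y" using x(1) y(1) s by (simp add: m_assoc)
    also have "\<dots> = (s \<otimes> x) \<otimes> y" by (simp only: x(2))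
    also have "\<dots> = s \<otimes> (x \<otimes> y)" using x(1) y(1) s by (simp add: m_assoc)
    finally show "x \<otimes> y \<in> C" unfolding C_def using x(1) y(1) by simp
  next
    fix x assume "x \<in> C"
    then have x: "x \<in> carrier G" "x \<otimes> s = s \<otimes> x" unfolding C_def by auto
    have "inv x \<otimes> s = inv x \<otimes> s \<otimes> x \<otimes> inv x" using x s by (simp add: m_assoc)
    also have "\<dots> = inv x \<otimes> (s \<otimes> x) \<otimes> inv x" using x s by (simp add: m_assoc)
    also have "\<dots> = inv x \<otimes> (x \<otimes> s) \<otimes> inv x" by (simp only: x(2))
    also have "\<dots> = s \<otimes> inv x" using x(1) s by (simp add: m_assoc[symmetric])
    finally show "inv x \<in> C" unfolding C_def using x by simp
  qed
  have KC: "K \<subseteq> C"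
  proof
    fix x assume x: "x \<in> K"
    show "x \<in> C" unfolding C_def using cen[OF x s] subgroup.mem_carrier[OF K x] by simp
  qed
  have sC: "s \<in> C" unfolding C_def using s by simp
  have KCs: "K \<subset> C" using KC sC False by blast
  have finC: "finite C" using finite_subset[OF subgroup.subset[OF C] fin] .
  have cardKC: "card K < card C" using psubset_card_mono[OF finC KCs] .
  have Kpos: "card K > 0" using finite_subset[OF subgroup.subset[OF K] fin] subgroup.one_closed[OF K]
    card_gt_0_iff by blast
  have l1: "card (rcosets C) * card C = card (carrier G)"
    using lagrange_finite[OF fin C] by (simp add: order_def)
  have l2: "card (rcosets K) * card K = card (carrier G)"
    using lagrange_finite[OF fin K] by (simp add: order_def)
  interpret GC: group "G\<lparr>carrier := C\<rparr>" using subgroup_imp_group[OF C] .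
  have KsubC: "subgroup K (G\<lparr>carrier := C\<rparr>)" using subgroup_incl[OF K C KC] .
  have l3: "card (rcosets\<^bsub>G\<lparr>carrier := C\<rparr>\<^esub> K) * card K = card C"
    using GC.lagrange_finite[OF _ KsubC] finC by (simp add: order_def)
  define a where "a = card (rcosets C)"
  define b where "b = card (rcosets\<^bsub>G\<lparr>carrier := C\<rparr>\<^esub> K)"
  have "b * card K > card K" using l3 cardKC b_def by simp
  hence b2: "b \<noteq> 1" by auto
  have "card (rcosets K) * card K = (a * b) * card K" using l1 l2 l3 a_def b_def
    by (metis mult.assoc)
  hence ab: "card (rcosets K) = a * b" using Kpos by simp
  hence "a = 1" using q b2 by (metis prime_product)
  hence "card C = card (carrier G)" using l1 a_def by simp
  hence "C = carrier G" using card_subset_eq[OF fin subgroup.subset[OF C]] by simp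
  then have "g \<in> C" using g by simp
  then show ?thesis unfolding C_def by simp
qed



lemma Rmap_Bij:
  assumes L: "is_loop L m e" and a: "a \<in> L"
  shows "Rmap L m a \<in> Bij L"
proof -
  have cl0: "\<forall>a\<in>L. \<forall>b\<in>L. m a b \<in> L"
    using L[unfolded is_loop_def] by (elim conjE) assumption
  have rd0: "\<forall>a\<in>L. \<forall>b\<in>L. \<exists>!y. y \<in> L \<and> m y a = b"
    using L[unfolded is_loop_def] by (elim conjE) assumption
  have cl: "m x y \<in> L" if "x \<in> L" "y \<in> L" for x y using cl0 that by simp
  have rd: "\<exists>!y. y \<in> L \<and> m y a = b" if "b \<in> L" for b using rd0 a that by simp
  have inj: "inj_on (\<lambda>x. m x a) L"
  proof (rule inj_onI)
    fix x y assume x: "x \<in> L" and y: "y \<in> L" and eq: "m x a = m y a"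
    from rd[OF cl[OF x a]] x y eq show "x = y" by metis
  qed
  have img: "(\<lambda>x. m x a) ` L = L"
  proof
    show "(\<lambda>x. m x a) ` L \<subseteq> L" using cl[OF _ a] by auto
    show "L \<subseteq> (\<lambda>x. m x a) ` L"
    proof
      fix b assume "b \<in> L"
      from rd[OF this] obtain y where "y \<in> L" "m y a = b" by auto
      then show "b \<in> (\<lambda>x. m x a) ` L" by (metis image_eqI)
    qed
  qed
  have "bij_betw (\<lambda>x. m x a) L L" using inj img by (simp add: bij_betw_def)
  hence "bij_betw (Rmap L m a) L L" unfolding Rmap_def
    using bij_betw_cong[of L "\<lambda>x\<in>L. m x a" "\<lambda>x. m x a"] by simp
  then show ?thesis unfolding Bij_def Rmap_def by simp
qed

lemma envG_basic:
  assumes L: "is_loop L m e"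
  shows "group (env_G L m)" "env_T L m \<subseteq> carrier (env_G L m)"
    "carrier (env_G L m) \<subseteq> Bij L"
    "subgroup (carrier (env_G L m)) (BijGroup L)"
    "\<And>g h. g \<in> carrier (env_G L m) \<Longrightarrow> h \<in> carrier (env_G L m) \<Longrightarrow>
        g \<otimes>\<^bsub>env_G L m\<^esub> h = compose L g h"
    "\<one>\<^bsub>env_G L m\<^esub> = (\<lambda>x\<in>L. x)"
proof -
  interpret B: group "BijGroup L" by (rule group_BijGroup)
  have TB: "env_T L m \<subseteq> carrier (BijGroup L)"
    unfolding env_T_def using Rmap_Bij[OF L] by (auto simp: BijGroup_def)
  have sg: "subgroup (generate (BijGroup L) (env_T L m)) (BijGroup L)"
    using B.generate_is_subgroup[OF TB] .
  show "subgroup (carrier (env_G L m)) (BijGroup L)" using sg by (simp add: env_G_def)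
  show "group (env_G L m)" unfolding env_G_def using B.subgroup_imp_group[OF sg] .
  show "env_T L m \<subseteq> carrier (env_G L m)" unfolding env_G_def
    using generate.incl[of _ "env_T L m" "BijGroup L"] by auto
  show Bs: "carrier (env_G L m) \<subseteq> Bij L" using sg subgroup.subset
    by (fastforce simp: env_G_def BijGroup_def)
  show "\<And>g h. g \<in> carrier (env_G L m) \<Longrightarrow> h \<in> carrier (env_G L m) \<Longrightarrow>
        g \<otimes>\<^bsub>env_G L m\<^esub> h = compose L g h"
    using Bs by (auto simp: env_G_def BijGroup_def)
  show "\<one>\<^bsub>env_G L m\<^esub> = (\<lambda>x\<in>L. x)" by (simp add: env_G_def BijGroup_def)
qed

lemma finite_Bij: "finite L \<Longrightarrow> finite (Bij L)"
proof -
  assume f: "finite L"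
  have "Bij L \<subseteq> PiE L (\<lambda>_. L)"
  proof
    fix f assume f: "f \<in> Bij L"
    show "f \<in> PiE L (\<lambda>_. L)" using Bij_imp_extensional[OF f] Bij_imp_funcset[OF f]
      by (simp add: PiE_def)
  qed
  moreover have "finite (PiE L (\<lambda>_. L))" using f by (simp add: finite_PiE)
  ultimately show ?thesis by (rule finite_subset)
qed

lemma two_comm:
  assumes fO: "finite Ob" and cO: "card Ob \<le> 2" and z: "z \<in> Ob" and OL: "Ob \<subseteq> L"
    and f: "inj_on f L" and g: "inj_on g L"
    and fO': "\<And>w. w \<in> Ob \<Longrightarrow> f w \<in> Ob" and gO': "\<And>w. w \<in> Ob \<Longrightarrow> g w \<in> Ob"
  shows "f (g z) = g (f z)"
proof -
  have two: "\<And>a b c. a \<in> Ob \<Longrightarrow> b \<in> Ob \<Longrightarrow> c \<in> Ob \<Longrightarrow> a = b \<or> a = c \<or> b = c"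
  proof (rule ccontr)
    fix a b c assume "a \<in> Ob" "b \<in> Ob" "c \<in> Ob" "\<not> (a = b \<or> a = c \<or> b = c)"
    hence "{a,b,c} \<subseteq> Ob" "card {a,b,c} = 3" by auto
    hence "3 \<le> card Ob" using fO card_mono by metis
    with cO show False by simp
  qed
  have injf: "\<And>x y. x \<in> Ob \<Longrightarrow> y \<in> Ob \<Longrightarrow> f x = f y \<Longrightarrow> x = y" using f OL inj_onD by (metis subsetD)
  have injg: "\<And>x y. x \<in> Ob \<Longrightarrow> y \<in> Ob \<Longrightarrow> g x = g y \<Longrightarrow> x = y" using g OL inj_onD by (metis subsetD)
  have fz: "f z \<in> Ob" and gz: "g z \<in> Ob" using fO' gO' z by auto
  have fgz: "f (g z) \<in> Ob" and gfz: "g (f z) \<in> Ob" using fO' gO' fz gz by auto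
  show ?thesis
  proof (cases "f z = z")
    case True
    show ?thesis
    proof (cases "g z = z")
      case True with \<open>f z = z\<close> show ?thesis by simp
    next
      case False
      have "f (g z) \<noteq> z" using injf[OF gz z] True False by metis
      hence "f (g z) = g z" using two[OF fgz z gz] False by metis
      thus ?thesis using True by simp
    qed
  next
    case False
    show ?thesis
    proof (cases "g z = z")
      case True
      have "g (f z) \<noteq> z" using injg[OF fz z] True False by metis
      hence "g (f z) = f z" using two[OF gfz z fz] False by metis
      thus ?thesis using True by simp
    next
      case gF: False
      have fg: "f z = g z" using two[OF fz z gz] False gF by metis
      have "f (g z) \<noteq> g z" using injf[OF gz z] fg gF by metis
      hence 1: "f (g z) = z" using two[OF fgz z gz] gF by metis
      have "g (f z) \<noteq> f z" using injg[OF fz z] fg False by metis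
      hence 2: "g (f z) = z" using two[OF gfz z fz] False by metis
      show ?thesis using 1 2 by simp
    qed
  qed
qed


lemma (in group) centr_subgroup:
  assumes s: "s \<in> carrier G"
  shows "subgroup {x \<in> carrier G. x \<otimes> s = s \<otimes> x} G"
proof
  show "{x \<in> carrier G. x \<otimes> s = s \<otimes> x} \<subseteq> carrier G" by auto
  show "\<one> \<in> {x \<in> carrier G. x \<otimes> s = s \<otimes> x}" using s by simp
next
  fix x y assume "x \<in> {x \<in> carrier G. x \<otimes> s = s \<otimes> x}" "y \<in> {x \<in> carrier G. x \<otimes> s = s \<otimes> x}"
  then have x: "x \<in> carrier G" "x \<otimes> s = s \<otimes> x" and y: "y \<in> carrier G" "y \<otimes> s = s \<otimes> y"
    by auto
  have "x \<otimes> y \<otimes> s = x \<otimes> (y \<otimes> s)" using x y s by (simp add: m_assoc)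
  also have "\<dots> = x \<otimes> (s \<otimes> y)" by (simp only: y(2))
  also have "\<dots> = (x \<otimes> s) \<otimes> y" using x(1) y(1) s by (simp add: m_assoc)
  also have "\<dots> = (s \<otimes> x) \<otimes> y" by (simp only: x(2))
  also have "\<dots> = s \<otimes> (x \<otimes> y)" using x(1) y(1) s by (simp add: m_assoc)
  finally show "x \<otimes> y \<in> {x \<in> carrier G. x \<otimes> s = s \<otimes> x}" using x(1) y(1) by simp
next
  fix x assume "x \<in> {x \<in> carrier G. x \<otimes> s = s \<otimes> x}"
  then have x: "x \<in> carrier G" "x \<otimes> s = s \<otimes> x" by auto
  have "inv x \<otimes> s = inv x \<otimes> s \<otimes> x \<otimes> inv x" using x s by (simp add: m_assoc)
  also have "\<dots> = inv x \<otimes> (s \<otimes> x) \<otimes> inv x" using x s by (simp add: m_assoc)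
  also have "\<dots> = inv x \<otimes> (x \<otimes> s) \<otimes> inv x" by (simp only: x(2))
  also have "\<dots> = s \<otimes> inv x" using x(1) s by (simp add: m_assoc[symmetric])
  finally show "inv x \<in> {x \<in> carrier G. x \<otimes> s = s \<otimes> x}" using x by simp
qed

lemma two_elems:
  assumes "finite A" "card A \<le> 2" "a \<in> A"
  shows "\<exists>c. A \<subseteq> {a, c}"
proof (cases "A \<subseteq> {a}")
  case True then show ?thesis by auto
next
  case False
  then obtain c where c: "c \<in> A" "c \<noteq> a" by auto
  have "A \<subseteq> {a, c}"
  proof
    fix d assume d: "d \<in> A"
    show "d \<in> {a, c}"
    proof (rule ccontr)
      assume "d \<notin> {a, c}"
      hence "{a, c, d} \<subseteq> A" "card {a, c, d} = 3" using c d assms(3) by auto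
      hence "3 \<le> card A" using assms(1) card_mono by metis
      with assms(2) show False by simp
    qed
  qed
  then show ?thesis by auto
qed

theorem lemma5p11:
  fixes L :: "'a set" and m :: "'a \<Rightarrow> 'a \<Rightarrow> 'a" and e :: 'a
    and q :: nat and K :: "('a \<Rightarrow> 'a) set"
  assumes "Factorial_Ring.prime q" and "odd q"
    and "finite L" and "rcc_loop L m e" and "card L = 2 * q"
    and "subgroup K (env_G L m)"
    and "env_H L m e \<subset> K" and "K \<subset> carrier (env_G L m)"
    and "card (rcosets\<^bsub>env_G L m\<^esub> K) = q"
    and "card (rcosets\<^bsub>(env_G L m)\<lparr>carrier := K\<rparr>\<^esub> (env_H L m e)) = 2"
    and "K \<lhd> env_G L m"
  shows "comm_group (env_G L m) \<and> env_H L m e = {\<one>\<^bsub>env_G L m\<^esub>}"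
proof -
  let ?G = "env_G L m"
  let ?T = "env_T L m"
  let ?H = "env_H L m e"
  have loop: "is_loop L m e" using assms(4) unfolding rcc_loop_def by simp
  have rcc: "\<And>g t. g \<in> carrier ?G \<Longrightarrow> t \<in> ?T \<Longrightarrow> g \<otimes>\<^bsub>?G\<^esub> t \<otimes>\<^bsub>?G\<^esub> inv\<^bsub>?G\<^esub> g \<in> ?T"
    using assms(4) unfolding rcc_loop_def by simp
  note EB = envG_basic[OF loop]
  interpret G: group ?G by (rule EB(1))
  interpret N: normal K ?G by (rule assms(11))
  have eL: "e \<in> L" using loop[unfolded is_loop_def] by (elim conjE) assumption
  have id0: "\<forall>a\<in>L. m e a = a \<and> m a e = a" using loop[unfolded is_loop_def] by (elim conjE) assumption
  have le: "m e a = a" if "a \<in> L" for a using id0 that by simp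
  have carrB: "g \<in> Bij L" if "g \<in> carrier ?G" for g using EB(3) that by (rule subsetD)
  have ap: "(g \<otimes>\<^bsub>?G\<^esub> h) x = g (h x)" if "g \<in> carrier ?G" "h \<in> carrier ?G" "x \<in> L" for g h x
    using EB(5)[OF that(1,2)] that(3) by (simp add: compose_def)
  have one_ap: "\<one>\<^bsub>?G\<^esub> x = x" if "x \<in> L" for x using EB(6) that by simp
  have gL: "g x \<in> L" if "g \<in> carrier ?G" "x \<in> L" for g x
    using Bij_imp_funcset[OF carrB[OF that(1)]] that(2) by (rule funcset_mem)
  have ginj: "inj_on g L" if "g \<in> carrier ?G" for g
    using carrB[OF that] unfolding Bij_def bij_betw_def by simp
  have gext: "g \<in> extensional L" if "g \<in> carrier ?G" for g
    using Bij_imp_extensional[OF carrB[OF that]] .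
  have invfix: "(inv\<^bsub>?G\<^esub> g) x = x" if "g \<in> carrier ?G" "g x = x" "x \<in> L" for g x
  proof -
    have "(inv\<^bsub>?G\<^esub> g) x = (inv\<^bsub>?G\<^esub> g) (g x)" using that by simp
    also have "\<dots> = (inv\<^bsub>?G\<^esub> g \<otimes>\<^bsub>?G\<^esub> g) x" using ap[of "inv\<^bsub>?G\<^esub> g" g x] that by simp
    also have "\<dots> = x" using one_ap that by simp
    finally show ?thesis .
  qed
  have Rz: "Rmap L m z \<in> carrier ?G" "Rmap L m z e = z" if "z \<in> L" for z
  proof -
    show "Rmap L m z \<in> carrier ?G" using EB(2) that unfolding env_T_def by auto
    show "Rmap L m z e = z" unfolding Rmap_def using eL le[OF that] by simp
  qed
  have TG: "t \<in> carrier ?G" if "t \<in> ?T" for t using EB(2) that by (rule subsetD)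
  have KG: "K \<subseteq> carrier ?G" using assms(8) by auto
  have Kc: "k \<in> carrier ?G" if "k \<in> K" for k using subgroup.mem_carrier[OF assms(6) that] .
  have Kinv: "inv\<^bsub>?G\<^esub> k \<in> K" if "k \<in> K" for k using subgroup.m_inv_closed[OF assms(6) that] .
  have HK: "?H \<subseteq> K" using assms(7) by auto
  have nK: "g \<otimes>\<^bsub>?G\<^esub> k \<otimes>\<^bsub>?G\<^esub> inv\<^bsub>?G\<^esub> g \<in> K" if "g \<in> carrier ?G" "k \<in> K" for g k
    using N.inv_op_closed2[OF that] .
  have nK1: "inv\<^bsub>?G\<^esub> g \<otimes>\<^bsub>?G\<^esub> k \<otimes>\<^bsub>?G\<^esub> g \<in> K" if "g \<in> carrier ?G" "k \<in> K" for g k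
    using N.inv_op_closed1[OF that] .
  have fin: "finite (carrier ?G)" using finite_subset[OF EB(3) finite_Bij[OF assms(3)]] .
  define orb where "orb x = (\<lambda>k. k x) ` K" for x
  define R where "R = rcosets\<^bsub>?G\<lparr>carrier := K\<rparr>\<^esub> ?H"
  define f where "f k = (inv\<^bsub>?G\<^esub> k) e" for k
  have Rsub: "\<exists>a. f ` C \<subseteq> {a}" if "C \<in> R" for C
  proof -
    from that obtain a where a: "a \<in> K" and Ca: "C = ?H #>\<^bsub>?G\<lparr>carrier := K\<rparr>\<^esub> a"
      unfolding R_def RCOSETS_def by auto
    have "f ` C \<subseteq> {f a}"
    proof
      fix y assume "y \<in> f ` C"
      then obtain h where h: "h \<in> ?H" and y: "y = f (h \<otimes>\<^bsub>?G\<^esub> a)"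
        unfolding Ca r_coset_def by auto
      have hc: "h \<in> carrier ?G" and he: "h e = e" using h unfolding env_H_def by auto
      have ac: "a \<in> carrier ?G" using Kc[OF a] .
      have "f (h \<otimes>\<^bsub>?G\<^esub> a) = (inv\<^bsub>?G\<^esub> a \<otimes>\<^bsub>?G\<^esub> inv\<^bsub>?G\<^esub> h) e"
        unfolding f_def using hc ac by (simp add: G.inv_mult_group)
      also have "\<dots> = (inv\<^bsub>?G\<^esub> a) ((inv\<^bsub>?G\<^esub> h) e)" using ap hc ac eL by simp
      also have "\<dots> = f a" unfolding f_def using invfix[OF hc he eL] by simp
      finally show "y \<in> {f a}" using y by simp
    qed
    then show ?thesis by auto
  qed
  have finR: "finite R" using assms(10) unfolding R_def by (metis card.infinite zero_neq_numeral)
  have orbe_sub: "orb e \<subseteq> (\<Union>C\<in>R. f ` C)"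
  proof
    fix y assume "y \<in> orb e"
    then obtain k where k: "k \<in> K" and y: "y = k e" unfolding orb_def by auto
    have ik: "inv\<^bsub>?G\<^esub> k \<in> K" using Kinv[OF k] .
    have CR: "?H #>\<^bsub>?G\<lparr>carrier := K\<rparr>\<^esub> (inv\<^bsub>?G\<^esub> k) \<in> R"
      unfolding R_def RCOSETS_def using ik by auto
    have oneH: "\<one>\<^bsub>?G\<^esub> \<in> ?H" unfolding env_H_def using one_ap[OF eL] by simp
    have "\<one>\<^bsub>?G\<^esub> \<otimes>\<^bsub>?G\<^esub> inv\<^bsub>?G\<^esub> k \<in> ?H #>\<^bsub>?G\<lparr>carrier := K\<rparr>\<^esub> (inv\<^bsub>?G\<^esub> k)"
      unfolding r_coset_def using oneH by auto
    hence mem: "inv\<^bsub>?G\<^esub> k \<in> ?H #>\<^bsub>?G\<lparr>carrier := K\<rparr>\<^esub> (inv\<^bsub>?G\<^esub> k)"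
      using Kc[OF ik] by simp
    have "f (inv\<^bsub>?G\<^esub> k) = y" unfolding f_def y using Kc[OF k] by simp
    then show "y \<in> (\<Union>C\<in>R. f ` C)" using CR mem by (metis UN_I image_eqI)
  qed
  have finU: "finite (\<Union>C\<in>R. f ` C)"
  proof (rule finite_UN_I[OF finR])
    fix C assume "C \<in> R"
    then obtain a where "f ` C \<subseteq> {a}" using Rsub by blast
    then show "finite (f ` C)" using finite_subset by auto
  qed
  have "card (\<Union>C\<in>R. f ` C) \<le> (\<Sum>C\<in>R. card (f ` C))" using card_UN_le[OF finR] .
  also have "\<dots> \<le> (\<Sum>C\<in>R. 1)"
  proof (rule sum_mono)
    fix C assume "C \<in> R"
    then obtain a where "f ` C \<subseteq> {a}" using Rsub by blast
    then show "card (f ` C) \<le> 1" using card_mono[of "{a}" "f ` C"] by simp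
  qed
  also have "\<dots> = 2" using assms(10) unfolding R_def by simp
  finally have cU: "card (\<Union>C\<in>R. f ` C) \<le> 2" .
  have orbe: "card (orb e) \<le> 2" using card_mono[OF finU orbe_sub] cU by simp
  have orbL: "orb x \<subseteq> L" if "x \<in> L" for x unfolding orb_def using gL Kc that by auto
  have orbfin: "finite (orb x)" if "x \<in> L" for x using finite_subset[OF orbL[OF that] assms(3)] .
  have orbx: "card (orb x) \<le> 2" if x: "x \<in> L" for x
  proof -
    define g where "g = Rmap L m x"
    have gc: "g \<in> carrier ?G" and ge: "g e = x" unfolding g_def using Rz x by auto
    have "orb x \<subseteq> g ` orb e"
    proof
      fix y assume "y \<in> orb x"
      then obtain k where k: "k \<in> K" and y: "y = k x" unfolding orb_def by auto
      define k' where "k' = inv\<^bsub>?G\<^esub> g \<otimes>\<^bsub>?G\<^esub> k \<otimes>\<^bsub>?G\<^esub> g"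
      have k'K: "k' \<in> K" unfolding k'_def using nK1[OF gc k] .
      have "g \<otimes>\<^bsub>?G\<^esub> k' = k \<otimes>\<^bsub>?G\<^esub> g" unfolding k'_def using gc Kc[OF k]
        by (simp add: G.m_assoc[symmetric])
      hence "y = g (k' e)" using ap[OF gc Kc[OF k'K] eL] ap[OF Kc[OF k] gc eL] y ge by simp
      then show "y \<in> g ` orb e" unfolding orb_def using k'K by auto
    qed
    hence "card (orb x) \<le> card (g ` orb e)" using card_mono finite_imageI orbfin[OF eL] by metis
    also have "\<dots> \<le> card (orb e)" using card_image_le orbfin[OF eL] by metis
    finally show ?thesis using orbe by simp
  qed
  have ab: "k1 \<otimes>\<^bsub>?G\<^esub> k2 = k2 \<otimes>\<^bsub>?G\<^esub> k1" if k1: "k1 \<in> K" and k2: "k2 \<in> K" for k1 k2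
  proof (rule extensionalityI)
    show "k1 \<otimes>\<^bsub>?G\<^esub> k2 \<in> extensional L" using gext Kc k1 k2 by simp
    show "k2 \<otimes>\<^bsub>?G\<^esub> k1 \<in> extensional L" using gext Kc k1 k2 by simp
  next
    fix x assume x: "x \<in> L"
    have maps: "kk w \<in> orb x" if kk: "kk \<in> K" and w: "w \<in> orb x" for kk w
    proof -
      from w obtain k' where k': "k' \<in> K" and "w = k' x" unfolding orb_def by auto
      hence "kk w = (kk \<otimes>\<^bsub>?G\<^esub> k') x" using ap Kc kk x by simp
      then show ?thesis unfolding orb_def using subgroup.m_closed[OF assms(6) kk k'] by auto
    qed
    have xo: "x \<in> orb x" unfolding orb_def
      using subgroup.one_closed[OF assms(6)] one_ap[OF x] by (metis image_eqI)
    have "k1 (k2 x) = k2 (k1 x)"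
      using two_comm[OF orbfin[OF x] orbx[OF x] xo orbL[OF x] ginj[OF Kc[OF k1]] ginj[OF Kc[OF k2]]]
        maps k1 k2 by blast
    then show "(k1 \<otimes>\<^bsub>?G\<^esub> k2) x = (k2 \<otimes>\<^bsub>?G\<^esub> k1) x" using ap Kc k1 k2 x by simp
  qed
  have sqK: "s [^]\<^bsub>?G\<^esub> q \<in> K" if s: "s \<in> carrier ?G" for s
  proof -
    have grpM: "group (?G Mod K)" by (rule N.factorgroup_is_group)
    have ord: "order (?G Mod K) = q" using assms(9) unfolding order_def FactGroup_def by simp
    have cs: "K #>\<^bsub>?G\<^esub> s \<in> carrier (?G Mod K)" unfolding FactGroup_def
      using G.rcosetsI[OF KG s] by simp
    have "(K #>\<^bsub>?G\<^esub> s) [^]\<^bsub>?G Mod K\<^esub> q = K"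
      using group.pow_order_eq_1[OF grpM cs] ord by simp
    hence "K #>\<^bsub>?G\<^esub> (s [^]\<^bsub>?G\<^esub> q) = K" using N.FactGroup_pow[OF s, of q] by simp
    moreover have "s [^]\<^bsub>?G\<^esub> q \<in> K #>\<^bsub>?G\<^esub> (s [^]\<^bsub>?G\<^esub> q)"
      using G.rcos_self[OF G.nat_pow_closed[OF s] assms(6)] .
    ultimately show ?thesis by simp
  qed
  have evinj: "inj_on (\<lambda>t. t e) ?T"
  proof (rule inj_onI)
    fix t1 t2 assume t1: "t1 \<in> ?T" and t2: "t2 \<in> ?T" and eq: "t1 e = t2 e"
    from t1 obtain a where a: "a \<in> L" "t1 = Rmap L m a" unfolding env_T_def by auto
    from t2 obtain b where b: "b \<in> L" "t2 = Rmap L m b" unfolding env_T_def by auto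
    have "a = b" using eq Rz(2)[OF a(1)] Rz(2)[OF b(1)] a(2) b(2) by simp
    then show "t1 = t2" using a b by simp
  qed
  have finT: "finite ?T" unfolding env_T_def using assms(3) by simp
  have TK: "k \<otimes>\<^bsub>?G\<^esub> s = s \<otimes>\<^bsub>?G\<^esub> k" if s: "s \<in> ?T" and k: "k \<in> K" for s k
  proof -
    have sc: "s \<in> carrier ?G" using TG[OF s] .
    define Xs where "Xs = (\<lambda>k. k \<otimes>\<^bsub>?G\<^esub> s \<otimes>\<^bsub>?G\<^esub> inv\<^bsub>?G\<^esub> k) ` K"
    have XT: "Xs \<subseteq> ?T"
    proof
      fix y assume "y \<in> Xs"
      then obtain kk where kk: "kk \<in> K" and y: "y = kk \<otimes>\<^bsub>?G\<^esub> s \<otimes>\<^bsub>?G\<^esub> inv\<^bsub>?G\<^esub> kk"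
        unfolding Xs_def by auto
      show "y \<in> ?T" using rcc[OF Kc[OF kk] s] y by simp
    qed
    have finXs: "finite Xs" using finite_subset[OF XT finT] .
    have se: "s e \<in> L" using gL[OF sc eL] .
    have evXs: "(\<lambda>t. t e) ` Xs \<subseteq> orb (s e)"
    proof
      fix y assume "y \<in> (\<lambda>t. t e) ` Xs"
      then obtain k where k: "k \<in> K" and y: "y = (k \<otimes>\<^bsub>?G\<^esub> s \<otimes>\<^bsub>?G\<^esub> inv\<^bsub>?G\<^esub> k) e"
        unfolding Xs_def by auto
      have kc: "k \<in> carrier ?G" using Kc[OF k] .
      define k' where "k' = k \<otimes>\<^bsub>?G\<^esub> (s \<otimes>\<^bsub>?G\<^esub> inv\<^bsub>?G\<^esub> k \<otimes>\<^bsub>?G\<^esub> inv\<^bsub>?G\<^esub> s)"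
      have k'K: "k' \<in> K" unfolding k'_def
        using subgroup.m_closed[OF assms(6) k nK[OF sc Kinv[OF k]]] .
      have "k \<otimes>\<^bsub>?G\<^esub> s \<otimes>\<^bsub>?G\<^esub> inv\<^bsub>?G\<^esub> k = k' \<otimes>\<^bsub>?G\<^esub> s"
        unfolding k'_def using kc sc by (simp add: G.m_assoc)
      hence "y = k' (s e)" using y ap[OF Kc[OF k'K] sc eL] by simp
      then show "y \<in> orb (s e)" unfolding orb_def using k'K by auto
    qed
    have "card Xs = card ((\<lambda>t. t e) ` Xs)"
      using card_image[OF inj_on_subset[OF evinj XT]] by simp
    also have "\<dots> \<le> card (orb (s e))" using card_mono[OF orbfin[OF se] evXs] .
    also have "\<dots> \<le> 2" using orbx[OF se] .
    finally have cXs: "card Xs \<le> 2" .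
    define Psi where "Psi = (\<lambda>y. y \<otimes>\<^bsub>?G\<^esub> inv\<^bsub>?G\<^esub> s) ` Xs"
    have finPsi: "finite Psi" unfolding Psi_def using finXs by simp
    have cPsi: "card Psi \<le> 2" unfolding Psi_def using card_image_le[OF finXs] cXs by (metis le_trans)
    have onePsi: "\<one>\<^bsub>?G\<^esub> \<in> Psi"
    proof -
      have "\<one>\<^bsub>?G\<^esub> \<otimes>\<^bsub>?G\<^esub> s \<otimes>\<^bsub>?G\<^esub> inv\<^bsub>?G\<^esub> \<one>\<^bsub>?G\<^esub> \<in> Xs"
        unfolding Xs_def by (rule imageI[OF subgroup.one_closed[OF assms(6)]])
      moreover have "\<one>\<^bsub>?G\<^esub> \<otimes>\<^bsub>?G\<^esub> s \<otimes>\<^bsub>?G\<^esub> inv\<^bsub>?G\<^esub> \<one>\<^bsub>?G\<^esub> \<otimes>\<^bsub>?G\<^esub> inv\<^bsub>?G\<^esub> s = \<one>\<^bsub>?G\<^esub>"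
        using sc by simp
      ultimately show ?thesis unfolding Psi_def by (metis image_eqI)
    qed
    obtain c where c: "Psi \<subseteq> {\<one>\<^bsub>?G\<^esub>, c}" using two_elems[OF finPsi cPsi onePsi] by auto
    have cK: "kk \<otimes>\<^bsub>?G\<^esub> s \<otimes>\<^bsub>?G\<^esub> inv\<^bsub>?G\<^esub> kk \<otimes>\<^bsub>?G\<^esub> inv\<^bsub>?G\<^esub> s \<in> {\<one>\<^bsub>?G\<^esub>, c}"
      if kk: "kk \<in> K" for kk
    proof -
      have "kk \<otimes>\<^bsub>?G\<^esub> s \<otimes>\<^bsub>?G\<^esub> inv\<^bsub>?G\<^esub> kk \<in> Xs" unfolding Xs_def using kk by auto
      hence "kk \<otimes>\<^bsub>?G\<^esub> s \<otimes>\<^bsub>?G\<^esub> inv\<^bsub>?G\<^esub> kk \<otimes>\<^bsub>?G\<^esub> inv\<^bsub>?G\<^esub> s \<in> Psi"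
        unfolding Psi_def by (metis image_eqI)
      then show ?thesis by (rule subsetD[OF c])
    qed
    show ?thesis using G.lemA[OF assms(6) nK ab sc sqK[OF sc] assms(2) cK k] .
  qed
  have eqG: "BijGroup L\<lparr>carrier := carrier ?G\<rparr> = ?G" by (simp add: env_G_def)
  have carrG: "carrier ?G = generate (BijGroup L) ?T" by (simp add: env_G_def)
  have cen: "k \<otimes>\<^bsub>?G\<^esub> g = g \<otimes>\<^bsub>?G\<^esub> k" if k: "k \<in> K" and g: "g \<in> carrier ?G" for k g
  proof -
    define Ck where "Ck = {x \<in> carrier ?G. x \<otimes>\<^bsub>?G\<^esub> k = k \<otimes>\<^bsub>?G\<^esub> x}"
    have sCk: "subgroup Ck ?G" unfolding Ck_def using G.centr_subgroup[OF Kc[OF k]] .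
    have sCkB: "subgroup Ck (BijGroup L)"
      using group.incl_subgroup[OF group_BijGroup EB(4)] sCk eqG by simp
    have TCk: "?T \<subseteq> Ck"
    proof
      fix t assume t: "t \<in> ?T"
      show "t \<in> Ck" unfolding Ck_def using TG[OF t] TK[OF t k] by simp
    qed
    have "generate (BijGroup L) ?T \<subseteq> Ck"
      using group.generate_subgroup_incl[OF group_BijGroup TCk sCkB] .
    hence "g \<in> Ck" using g carrG by auto
    then show ?thesis unfolding Ck_def by simp
  qed
  have mc: "x \<otimes>\<^bsub>?G\<^esub> y = y \<otimes>\<^bsub>?G\<^esub> x" if "x \<in> carrier ?G" "y \<in> carrier ?G" for x y
    using G.lemB[OF fin assms(6) _ cen that] assms(1) assms(9) by simp
  have comm: "comm_group ?G" using G.group_comm_groupI mc by blast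
  have H1: "?H = {\<one>\<^bsub>?G\<^esub>}"
  proof
    show "{\<one>\<^bsub>?G\<^esub>} \<subseteq> ?H" unfolding env_H_def using one_ap[OF eL] by simp
    show "?H \<subseteq> {\<one>\<^bsub>?G\<^esub>}"
    proof
      fix h assume "h \<in> ?H"
      hence hc: "h \<in> carrier ?G" and he: "h e = e" unfolding env_H_def by auto
      have "h = \<one>\<^bsub>?G\<^esub>"
      proof (rule extensionalityI[OF gext[OF hc] gext[OF G.one_closed]])
        fix x assume x: "x \<in> L"
        have rc: "Rmap L m x \<in> carrier ?G" and re: "Rmap L m x e = x" using Rz x by auto
        have "h x = (h \<otimes>\<^bsub>?G\<^esub> Rmap L m x) e" using ap[OF hc rc eL] re by simp
        also have "\<dots> = (Rmap L m x \<otimes>\<^bsub>?G\<^esub> h) e"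
          using mc[OF hc rc] by simp
        also have "\<dots> = x" using ap[OF rc hc eL] he re by simp
        finally show "h x = \<one>\<^bsub>?G\<^esub> x" using one_ap[OF x] by simp
      qed
      then show "h \<in> {\<one>\<^bsub>?G\<^esub>}" by simp
    qed
  qed
  show ?thesis using comm H1 by simp
qed


end
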